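(* Suppose that (AA) holds. Let $T,\varepsilon,\eta>0$. Then there exists $\kappa>0$ such that $\liminf_{n\to\infty}\mathbb{P}\Big(\max_{1\le k\le K}\sup_{t\in[0,T]}\sup_{x\in\mathbb{R}_+}\bar{\mathcal{R}}^n_k(t)(I^\kappa_x)\le\varepsilon\Big)\ge1-\eta$.
   Context: For $x\in\mathbb{R}_+$ and $\kappa>0$, $I^\kappa_x=((x-\kappa)^+,x+\kappa)$. Fix $K\in\mathbb{N}$. For each $1\le k\le K$, $E_k(\cdot)$ is a renewal process with rate $\lambda_k\in(0,\infty)$ and strictly positive interarrival times, and $E^n_k(t)=E_k(nt)$; $\tau^n_{k,i}$ is the time of the $i$-th jump of $E^n_k$. $\Gamma_k$ is a continuous probability distribution on $(0,\infty)$ with finite mean. Assumption (AA): for each $n$ there are $K$ independent sequences $\{g^n_{k,i}\}_{i\in\mathbb{N}}$ of strictly positive i.i.d. random variables, independent of the arrival processes, with $g^n_{k,1}\sim\Gamma^n_k$ of finite mean, such that $\lim_{M\to\infty}\sup_n\int_{(M,\infty)}x\,\Gamma^n_k(dx)=0$ and $\Gamma^n_k\to\Gamma_k$ weakly for each $k$. $\delta^+_x$: unit mass at $x$ if $x>0$, zero otherwise. $g^n_{k,i}(t)=(g^n_{k,i}-(t-\tau^n_{k,i})^+)^+$, $\bar{\mathcal{R}}^n_k(t)=\frac1n\sum_{i=1}^{E^n_k(t)}\delta^+_{g^n_{k,i}(t)}$. *)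

theory Defs
  imports "HOL-Probability.Probability"
begin

definition renewal_count :: "(nat \<Rightarrow> real) \<Rightarrow> real \<Rightarrow> nat" where
  "renewal_count v t = card {m::nat. 1 \<le> m \<and> (\<Sum>j<m. v j) \<le> t}"

definition interval_I :: "real \<Rightarrow> real \<Rightarrow> real set" where
  "interval_I \<kappa> x = {max 0 (x - \<kappa>) <..< x + \<kappa>}"

definition residual :: "real \<Rightarrow> real \<Rightarrow> real \<Rightarrow> real" where
  "residual gv \<tau> t = max 0 (gv - max 0 (t - \<tau>))"

text \<open>Scaled measure-valued process evaluated on a set A:
  Rbar^n(t)(A) = (1/n) sum_{i=1}^{E(nt)} delta^+_{g_i(t)}(A), with 0-based indices:
  arrival number i+1 happens (for E^n) at time (v 0 + ... + v i)/n and carries g i.\<close>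
definition Rbar :: "nat \<Rightarrow> (nat \<Rightarrow> real) \<Rightarrow> (nat \<Rightarrow> real) \<Rightarrow> real \<Rightarrow> real set \<Rightarrow> real" where
  "Rbar n v gs t A = (1 / real n) * real (card {i. i < renewal_count v (real n * t) \<and>
      residual (gs i) ((\<Sum>j\<le>i. v j) / real n) t > 0 \<and>
      residual (gs i) ((\<Sum>j\<le>i. v j) / real n) t \<in> A})"

definition gen_sigma :: "'a measure \<Rightarrow> ('i \<Rightarrow> 'a \<Rightarrow> real) \<Rightarrow> 'i set \<Rightarrow> 'a set set" where
  "gen_sigma M X I = sigma_sets (space M) (\<Union>i\<in>I. {X i -` B \<inter> space M | B. B \<in> sets borel})"

end

theory Submission
  imports Defs
begin

lemma rc_less_iff:
  assumes nn: "\<And>j. v j \<ge> (0::real)"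
  shows "i < renewal_count v s \<longleftrightarrow> (\<Sum>j\<le>i. v j) \<le> s \<and> (\<exists>m. (\<Sum>j<m. v j) > s)"
proof -
  define A where "A = {m::nat. 1 \<le> m \<and> (\<Sum>j<m. v j) \<le> s}"
  have rc: "renewal_count v s = card A" unfolding renewal_count_def A_def ..
  have mono: "(\<Sum>j<m. v j) \<le> (\<Sum>j<m'. v j)" if "m \<le> m'" for m m'
    using that by (intro sum_mono2) (auto simp: nn)
  show ?thesis
  proof
    assume i: "i < renewal_count v s"
    have "card A > 0" using i rc by simp
    hence fin: "finite A" using card_ge_0_finite by blast
    have 1: "(\<Sum>j\<le>i. v j) \<le> s"
    proof (rule ccontr)
      assume "\<not> ?thesis"
      hence gt: "(\<Sum>j<Suc i. v j) > s" by (simp add: lessThan_Suc_atMost)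
      have "A \<subseteq> {1..i}"
      proof
        fix m assume "m \<in> A"
        hence "1 \<le> m" "(\<Sum>j<m. v j) \<le> s" by (auto simp: A_def)
        moreover have "m \<le> i"
        proof (rule ccontr)
          assume "\<not> m \<le> i" hence "Suc i \<le> m" by simp
          from mono[OF this] gt \<open>(\<Sum>j<m. v j) \<le> s\<close> show False by simp
        qed
        ultimately show "m \<in> {1..i}" by simp
      qed
      hence "card A \<le> i" using card_mono[of "{1..i}" A] by simp
      with i rc show False by simp
    qed
    have 2: "\<exists>m. (\<Sum>j<m. v j) > s"
    proof (rule ccontr)
      assume "\<not> ?thesis"
      hence "{1..} \<subseteq> A" by (auto simp: A_def not_less)
      hence "infinite A" using infinite_Ici[of "1::nat"] finite_subset by blast
      with fin show False by simp
    qed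
    from 1 2 show "(\<Sum>j\<le>i. v j) \<le> s \<and> (\<exists>m. (\<Sum>j<m. v j) > s)" by blast
  next
    assume h: "(\<Sum>j\<le>i. v j) \<le> s \<and> (\<exists>m. (\<Sum>j<m. v j) > s)"
    then obtain m where m: "(\<Sum>j<m. v j) > s" by blast
    have "A \<subseteq> {..<m}"
    proof
      fix m' assume "m' \<in> A"
      hence "(\<Sum>j<m'. v j) \<le> s" by (auto simp: A_def)
      thus "m' \<in> {..<m}" using mono[of m m'] m by (cases "m \<le> m'") auto
    qed
    hence fin: "finite A" using finite_subset by blast
    have "{1..Suc i} \<subseteq> A"
    proof
      fix m' assume "m' \<in> {1..Suc i}"
      hence "m' \<le> Suc i" "1 \<le> m'" by auto
      hence "(\<Sum>j<m'. v j) \<le> (\<Sum>j<Suc i. v j)" using mono by blast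
      also have "\<dots> \<le> s" using h by (simp add: lessThan_Suc_atMost)
      finally show "m' \<in> A" using \<open>1 \<le> m'\<close> by (simp add: A_def)
    qed
    from card_mono[OF fin this] have "Suc i \<le> card A" by simp
    thus "i < renewal_count v s" using rc by simp
  qed
qed


definition Ig :: "real \<Rightarrow> nat \<Rightarrow> nat \<Rightarrow> real set" where
  "Ig h J j = (if j < J then {real j * h <.. (real j + 2) * h} else {real J * h <..})"

lemma grid_cover:
  assumes h: "h > 0" and J: "J \<ge> 1"
  shows "\<exists>j\<le>J. \<forall>y. 0 < y \<and> c < y \<and> y < c + h \<longrightarrow> y \<in> Ig h J j"
proof (cases "c \<ge> real J * h")
  case True
  thus ?thesis by (intro exI[of _ J]) (auto simp: Ig_def)
next
  case F: False
  show ?thesis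
  proof (cases "c < 0")
    case True
    thus ?thesis using J h by (intro exI[of _ 0]) (auto simp: Ig_def)
  next
    case False
    define j where "j = nat \<lfloor>c / h\<rfloor>"
    have fl: "real j = of_int \<lfloor>c / h\<rfloor>" using False h by (simp add: j_def)
    have "of_int \<lfloor>c / h\<rfloor> \<le> c / h" by (rule of_int_floor_le)
    hence "of_int \<lfloor>c / h\<rfloor> * h \<le> c" using h by (metis pos_le_divide_eq)
    hence jle: "real j * h \<le> c" using fl by simp
    have "c / h < of_int \<lfloor>c / h\<rfloor> + 1" by (rule real_of_int_floor_add_one_gt)
    hence "c < (of_int \<lfloor>c / h\<rfloor> + 1) * h" using h by (metis pos_divide_less_eq)
    hence jgt: "c < (real j + 1) * h" using fl by simp
    have "real j < real J"
    proof -
      have "real j * h < real J * h" using jle F by simp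
      thus ?thesis using h by simp
    qed
    hence "j < J" by simp
    thus ?thesis using jle jgt
      by (intro exI[of _ j]) (auto simp: Ig_def algebra_simps)
  qed
qed

lemma det_bound:
  fixes n b L J :: nat and v gam :: "nat \<Rightarrow> real" and h T cc t x :: real
  assumes vpos: "\<And>j. v j > 0" and gpos: "\<And>j. gam j > 0"
    and n: "n \<ge> 1" and b: "b \<ge> 1" and h: "h > 0" and J: "J \<ge> 1"
    and E1: "(\<Sum>j<L*b. v j) > real n * T"
    and E2: "\<And>l. l < L \<Longrightarrow> (\<Sum>j\<in>{l*b..<(Suc l)*b}. v j) \<le> real n * h / 2"
    and E3: "\<And>l j. l < L \<Longrightarrow> j \<le> J \<Longrightarrow> real (card {i\<in>{l*b..<(Suc l)*b}. gam i \<in> Ig h J j}) \<le> cc"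
    and t: "t \<in> {0..T}" and x: "x \<ge> 0"
  shows "real (card {i. i < renewal_count v (real n * t) \<and>
      residual (gam i) ((\<Sum>j\<le>i. v j) / real n) t > 0 \<and>
      residual (gam i) ((\<Sum>j\<le>i. v j) / real n) t \<in> interval_I (h/4) x}) \<le> real L * cc"
proof -
  define C where "C = {i. i < renewal_count v (real n * t) \<and>
      residual (gam i) ((\<Sum>j\<le>i. v j) / real n) t > 0 \<and>
      residual (gam i) ((\<Sum>j\<le>i. v j) / real n) t \<in> interval_I (h/4) x}"
  define P where "P l = (\<Sum>j<l*b. v j)" for l
  define cl where "cl l = x - h/4 + t - P l / real n - h/2" for l
  have "\<forall>l. \<exists>j\<le>J. \<forall>y. 0 < y \<and> cl l < y \<and> y < cl l + h \<longrightarrow> y \<in> Ig h J j"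
    using grid_cover[OF h J] by blast
  then obtain jl where jl: "\<And>l. jl l \<le> J"
    "\<And>l y. 0 < y \<Longrightarrow> cl l < y \<Longrightarrow> y < cl l + h \<Longrightarrow> y \<in> Ig h J (jl l)"
    by metis
  have nn: "\<And>j. v j \<ge> 0" using vpos less_imp_le by blast
  have npos: "real n > 0" using n by simp
  have sub: "C \<subseteq> (\<Union>l<L. {i\<in>{l*b..<(Suc l)*b}. gam i \<in> Ig h J (jl l)})"
  proof
    fix i assume "i \<in> C"
    hence i1: "i < renewal_count v (real n * t)"
      and r0: "residual (gam i) ((\<Sum>j\<le>i. v j) / real n) t > 0"
      and rI: "residual (gam i) ((\<Sum>j\<le>i. v j) / real n) t \<in> interval_I (h/4) x"
      by (auto simp: C_def)
    have Si: "(\<Sum>j\<le>i. v j) \<le> real n * t" by (rule conjunct1[OF iffD1[OF rc_less_iff[OF nn] i1]])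
    have "i < L*b"
    proof (rule ccontr)
      assume "\<not> i < L*b"
      hence "{..<L*b} \<subseteq> {..i}" by auto
      hence "(\<Sum>j<L*b. v j) \<le> (\<Sum>j\<le>i. v j)" by (intro sum_mono2) (auto simp: nn)
      moreover have "real n * t \<le> real n * T" using t npos by simp
      ultimately show False using E1 Si by simp
    qed
    define l where "l = i div b"
    have bpos: "b > 0" using b by simp
    have lL: "l < L" using \<open>i < L*b\<close> bpos by (simp add: l_def less_mult_imp_div_less)
    have il: "l*b \<le> i" by (simp add: l_def)
    have iu: "i < Suc l * b"
    proof -
      have "i = l*b + i mod b" by (simp add: l_def)
      moreover have "i mod b < b" using bpos by simp
      ultimately show ?thesis by simp
    qed
    define tau where "tau = (\<Sum>j\<le>i. v j) / real n"
    have split: "(\<Sum>j\<le>i. v j) = P l + (\<Sum>j\<in>{l*b..i}. v j)"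
    proof -
      have "{..i} = {..<l*b} \<union> {l*b..i}" using il by auto
      thus ?thesis unfolding P_def by (subst sum.union_disjoint[symmetric]) auto
    qed
    have seg0: "(\<Sum>j\<in>{l*b..i}. v j) \<ge> 0" by (intro sum_nonneg) (simp add: nn)
    have "(\<Sum>j\<in>{l*b..i}. v j) \<le> (\<Sum>j\<in>{l*b..<(Suc l)*b}. v j)"
      using iu by (intro sum_mono2) (auto simp: nn)
    also have "\<dots> \<le> real n * h / 2" using E2[OF lL] .
    finally have seg1: "(\<Sum>j\<in>{l*b..i}. v j) \<le> real n * h / 2" .
    have tau_lo: "tau \<ge> P l / real n" using split seg0 npos
      by (simp add: tau_def divide_right_mono)
    have tau_hi: "tau \<le> P l / real n + h / 2"
    proof -
      have "tau = P l / real n + (\<Sum>j\<in>{l*b..i}. v j) / real n"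
        by (simp add: tau_def split add_divide_distrib)
      moreover have "(\<Sum>j\<in>{l*b..i}. v j) / real n \<le> h / 2"
        using seg1 npos by (simp add: divide_le_eq mult.commute)
      ultimately show ?thesis by simp
    qed
    have taut: "tau \<le> t" using Si npos by (simp add: tau_def divide_le_eq mult.commute)
    have res: "residual (gam i) tau t = gam i - (t - tau)"
      using r0 taut by (simp add: residual_def tau_def[symmetric])
    have lo: "x - h/4 < gam i - (t - tau)" and hi: "gam i - (t - tau) < x + h/4"
      using rI res by (auto simp: interval_I_def tau_def[symmetric])
    have "cl l < gam i" using lo tau_hi by (simp add: cl_def)
    moreover have "gam i < cl l + h" using hi tau_lo by (simp add: cl_def)
    ultimately have "gam i \<in> Ig h J (jl l)" using jl(2) gpos by blast
    thus "i \<in> (\<Union>l<L. {i\<in>{l*b..<(Suc l)*b}. gam i \<in> Ig h J (jl l)})"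
      using lL il iu by auto
  qed
  have "card C \<le> card (\<Union>l<L. {i\<in>{l*b..<(Suc l)*b}. gam i \<in> Ig h J (jl l)})"
    by (rule card_mono[OF _ sub]) auto
  also have "\<dots> \<le> (\<Sum>l<L. card {i\<in>{l*b..<(Suc l)*b}. gam i \<in> Ig h J (jl l)})"
    by (rule card_UN_le) simp
  finally have "real (card C) \<le> real (\<Sum>l<L. card {i\<in>{l*b..<(Suc l)*b}. gam i \<in> Ig h J (jl l)})"
    by (simp only: of_nat_le_iff)
  also have "\<dots> = (\<Sum>l<L. real (card {i\<in>{l*b..<(Suc l)*b}. gam i \<in> Ig h J (jl l)}))"
    by (rule of_nat_sum)
  also have "\<dots> \<le> (\<Sum>l<L. cc)" by (intro sum_mono E3 jl(1)) simp
  finally show ?thesis by (simp add: C_def)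
qed


definition Cset :: "nat \<Rightarrow> (nat \<Rightarrow> real) \<Rightarrow> (nat \<Rightarrow> real) \<Rightarrow> real \<Rightarrow> real set \<Rightarrow> nat set" where
  "Cset n v gs t A = {i. i < renewal_count v (real n * t) \<and>
      residual (gs i) ((\<Sum>j\<le>i. v j) / real n) t > 0 \<and>
      residual (gs i) ((\<Sum>j\<le>i. v j) / real n) t \<in> A}"

lemma Rbar_Cset: "Rbar n v gs t A = real (card (Cset n v gs t A)) / real n"
  by (simp add: Rbar_def Cset_def)

lemma Cset_finite: "finite (Cset n v gs t A)"
  by (rule finite_subset[of _ "{..<renewal_count v (real n * t)}"]) (auto simp: Cset_def)

lemma Cset_index_open:
  assumes nn: "\<And>j. v j \<ge> (0::real)" and n: "n \<ge> 1" and kap: "\<kappa> > 0"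
    and i: "i \<in> Cset n v gs t0 (interval_I \<kappa> x0)"
  shows "\<exists>d>0. \<forall>t x. t0 \<le> t \<longrightarrow> t < t0 + d \<longrightarrow> x0 \<le> x \<longrightarrow> x < x0 + d \<longrightarrow>
           i \<in> Cset n v gs t (interval_I \<kappa> x)"
proof -
  have npos: "real n > 0" using n by simp
  define tau where "tau = (\<Sum>j\<le>i. v j) / real n"
  from i have i1: "i < renewal_count v (real n * t0)"
    and r0: "residual (gs i) tau t0 > 0"
    and rI: "residual (gs i) tau t0 \<in> interval_I \<kappa> x0"
    by (auto simp: Cset_def tau_def)
  have rc: "(\<Sum>j\<le>i. v j) \<le> real n * t0 \<and> (\<exists>m. (\<Sum>j<m. v j) > real n * t0)"
    by (rule iffD1[OF rc_less_iff[OF nn] i1])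
  then obtain m where m: "(\<Sum>j<m. v j) > real n * t0" by blast
  have taut: "tau \<le> t0" using rc npos by (simp add: tau_def divide_le_eq mult.commute)
  define w where "w = gs i + tau - t0"
  have res0: "residual (gs i) tau t0 = max 0 w"
    using taut by (simp add: residual_def w_def)
  have wpos: "w > 0" using r0 res0 by simp
  have wI: "max 0 (x0 - \<kappa>) < w" "w < x0 + \<kappa>" using rI res0 wpos by (auto simp: interval_I_def)
  define m1 where "m1 = w - max 0 (x0 - \<kappa>)"
  have m1pos: "m1 > 0" using wI by (simp add: m1_def)
  define d1 where "d1 = ((\<Sum>j<m. v j) - real n * t0) / real n"
  have d1pos: "d1 > 0" using m npos by (simp add: d1_def)
  define d where "d = min d1 (min w m1 / 2)"
  have dpos: "d > 0" using d1pos wpos m1pos by (simp add: d_def)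
  show ?thesis
  proof (intro exI[of _ d] conjI allI impI dpos)
    fix t x assume t1: "t0 \<le> t" and t2: "t < t0 + d" and x1: "x0 \<le> x" and x2: "x < x0 + d"
    have "real n * t < (\<Sum>j<m. v j)"
    proof -
      have "t < t0 + d1" using t2 by (simp add: d_def)
      hence "real n * t < real n * (t0 + d1)" using npos by simp
      also have "\<dots> = (\<Sum>j<m. v j)" using npos by (simp add: d1_def field_simps)
      finally show ?thesis .
    qed
    moreover have "(\<Sum>j\<le>i. v j) \<le> real n * t" using rc t1 npos
      by (meson mult_left_mono less_imp_le order_trans)
    ultimately have "(\<Sum>j\<le>i. v j) \<le> real n * t \<and> (\<exists>m. (\<Sum>j<m. v j) > real n * t)"
      by blast
    hence i1': "i < renewal_count v (real n * t)"
      by (rule iffD2[OF rc_less_iff[OF nn]])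
    have "t - t0 < d" using t2 by simp
    hence dd: "t - t0 < w / 2" "t - t0 < m1 / 2" by (auto simp: d_def)
    have res: "residual (gs i) tau t = w - (t - t0)"
      using taut t1 dd wpos by (simp add: residual_def w_def)
    have "residual (gs i) tau t > 0" using res dd wpos by linarith
    moreover have "residual (gs i) tau t \<in> interval_I \<kappa> x"
    proof -
      have a: "w - (t - t0) < x + \<kappa>" using wI t1 x1 by simp
      have "max 0 (x - \<kappa>) \<le> max 0 (x0 - \<kappa>) + (x - x0)" using x1 by simp
      also have "\<dots> < max 0 (x0 - \<kappa>) + d" using x2 by simp
      also have "\<dots> \<le> max 0 (x0 - \<kappa>) + m1 / 2" by (simp add: d_def)
      also have "\<dots> = w - m1/2" unfolding m1_def by (simp add: field_simps)
      also have "\<dots> < w - (t - t0)" using dd by simp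
      finally show ?thesis using a res by (simp add: interval_I_def)
    qed
    ultimately show "i \<in> Cset n v gs t (interval_I \<kappa> x)"
      using i1' by (simp add: Cset_def tau_def)
  qed
qed

lemma Cset_approx:
  assumes nn: "\<And>j. v j \<ge> (0::real)" and n: "n \<ge> 1" and kap: "\<kappa> > 0"
    and t0: "t0 \<in> {0..T}" and x0: "x0 \<ge> 0"
  shows "\<exists>t x. t \<in> insert T (\<rat> \<inter> {0..T}) \<and> x \<in> \<rat> \<inter> {0..} \<and>
     card (Cset n v gs t0 (interval_I \<kappa> x0)) \<le> card (Cset n v gs t (interval_I \<kappa> x))"
proof -
  define F where "F = Cset n v gs t0 (interval_I \<kappa> x0)"
  have "\<forall>i\<in>F. \<exists>d>0. \<forall>t x. t0 \<le> t \<longrightarrow> t < t0 + d \<longrightarrow> x0 \<le> x \<longrightarrow> x < x0 + d \<longrightarrow>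
           i \<in> Cset n v gs t (interval_I \<kappa> x)"
    using Cset_index_open[OF nn n kap] by (simp add: F_def)
  then obtain dd where dd: "\<And>i. i \<in> F \<Longrightarrow> dd i > 0"
    "\<And>i t x. i \<in> F \<Longrightarrow> t0 \<le> t \<Longrightarrow> t < t0 + dd i \<Longrightarrow> x0 \<le> x \<Longrightarrow> x < x0 + dd i \<Longrightarrow>
           i \<in> Cset n v gs t (interval_I \<kappa> x)"
    by metis
  have finF: "finite F" by (simp add: F_def Cset_finite)
  define d where "d = Min (insert 1 (dd ` F))"
  have dpos: "d > 0" unfolding d_def using finF dd(1) by (subst Min_gr_iff) auto
  have dle: "d \<le> dd i" if "i \<in> F" for i unfolding d_def using finF that by (intro Min_le) auto
  obtain x where x: "x \<in> \<rat>" "x0 < x" "x < x0 + d"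
    using Rats_dense_in_real[of x0 "x0 + d"] dpos by auto
  obtain t where t: "t \<in> insert T (\<rat> \<inter> {0..T})" "t0 \<le> t" "t < t0 + d"
  proof (cases "t0 = T")
    case True thus ?thesis using that[of T] dpos by simp
  next
    case False
    hence "t0 < min T (t0 + d)" using t0 dpos by auto
    then obtain r where "r \<in> \<rat>" "t0 < r" "r < min T (t0 + d)"
      using Rats_dense_in_real by blast
    thus ?thesis using that[of r] t0 by simp
  qed
  have "F \<subseteq> Cset n v gs t (interval_I \<kappa> x)"
  proof
    fix i assume i: "i \<in> F"
    show "i \<in> Cset n v gs t (interval_I \<kappa> x)"
      using dd(2)[OF i t(2) _ _] t(3) x dle[OF i] by force
  qed
  hence "card F \<le> card (Cset n v gs t (interval_I \<kappa> x))" by (intro card_mono Cset_finite)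
  thus ?thesis using t x x0 by (intro exI[of _ t] exI[of _ x]) (auto simp: F_def)
qed


lemma card_le_via_trunc:
  assumes "finite (S::nat set)"
  shows "real (card S) \<le> c \<longleftrightarrow> (\<forall>m. real (card ({..<m} \<inter> S)) \<le> c)"
proof
  assume a: "real (card S) \<le> c"
  show "\<forall>m. real (card ({..<m} \<inter> S)) \<le> c"
  proof
    fix m
    have "card ({..<m} \<inter> S) \<le> card S" by (intro card_mono assms) auto
    thus "real (card ({..<m} \<inter> S)) \<le> c" using a by linarith
  qed
next
  assume a: "\<forall>m. real (card ({..<m} \<inter> S)) \<le> c"
  obtain k where "S \<subseteq> {..<k}" using assms finite_nat_iff_bounded by blast
  hence "{..<k} \<inter> S = S" by blast
  thus "real (card S) \<le> c" using a by metis
qed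

lemma Cset_approx':
  assumes nn: "\<And>j. v j \<ge> (0::real)" and n: "n \<ge> 1" and kap: "\<kappa> > 0"
    and t0: "t0 \<in> {0..T}" and x0: "x0 \<ge> 0"
  obtains t x where "t \<in> insert T (\<rat> \<inter> {0..T})" "x \<in> \<rat> \<inter> {0..}"
     "card (Cset n v gs t0 (interval_I \<kappa> x0)) \<le> card (Cset n v gs t (interval_I \<kappa> x))"
  using Cset_approx[where v=v and gs=gs and n=n, OF nn n kap t0 x0] by (elim exE conjE) (rule that; assumption)

lemma Cset_meas:
  fixes M :: "'a measure"
  assumes V[measurable]: "\<And>i. V i \<in> borel_measurable M"
    and Gm[measurable]: "\<And>i. Gm i \<in> borel_measurable M"
    and nn: "\<And>i \<omega>. \<omega> \<in> space M \<Longrightarrow> V i \<omega> \<ge> 0"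
  shows "{\<omega>\<in>space M. real (card (Cset n (\<lambda>i. V i \<omega>) (\<lambda>i. Gm i \<omega>) t (interval_I \<kappa> x))) \<le> c} \<in> sets M"
proof -
  define Q where "Q i \<omega> \<longleftrightarrow> (\<Sum>j\<le>i. V j \<omega>) \<le> real n * t \<and> (\<exists>m::nat. (\<Sum>j<m. V j \<omega>) > real n * t) \<and>
      max 0 (Gm i \<omega> - max 0 (t - (\<Sum>j\<le>i. V j \<omega>) / real n)) > 0 \<and>
      max 0 (x - \<kappa>) < max 0 (Gm i \<omega> - max 0 (t - (\<Sum>j\<le>i. V j \<omega>) / real n)) \<and>
      max 0 (Gm i \<omega> - max 0 (t - (\<Sum>j\<le>i. V j \<omega>) / real n)) < x + \<kappa>" for i \<omega>
  have Qm[measurable]: "Measurable.pred M (Q i)" for i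
    unfolding Q_def by measurable
  have eq: "Cset n (\<lambda>i. V i \<omega>) (\<lambda>i. Gm i \<omega>) t (interval_I \<kappa> x) = {i. Q i \<omega>}" if "\<omega> \<in> space M" for \<omega>
  proof -
    have nn': "\<And>j. V j \<omega> \<ge> 0" using nn that by blast
    show ?thesis unfolding Cset_def Q_def rc_less_iff[where v="\<lambda>i. V i \<omega>", OF nn'] residual_def interval_I_def
      by auto
  qed
  have fin: "finite {i. Q i \<omega>}" if "\<omega> \<in> space M" for \<omega>
    using Cset_finite eq[OF that] by metis
  have "{\<omega>\<in>space M. real (card (Cset n (\<lambda>i. V i \<omega>) (\<lambda>i. Gm i \<omega>) t (interval_I \<kappa> x))) \<le> c}
      = {\<omega>\<in>space M. \<forall>m\<in>UNIV. (\<Sum>i<m. indicator {i. Q i \<omega>} i) \<le> c}"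
  proof (intro Collect_cong conj_cong refl)
    fix \<omega> assume w: "\<omega> \<in> space M"
    have s: "(\<Sum>i<m. indicator {i. Q i \<omega>} i) = real (card ({..<m} \<inter> {i. Q i \<omega>}))" for m
      proof -
        have "real (card ({..<m} \<inter> {i. Q i \<omega>})) = (\<Sum>x\<in>{..<m} \<inter> {i. Q i \<omega>}. 1)" by simp
        also have "\<dots> = (\<Sum>x<m. if x \<in> {i. Q i \<omega>} then 1 else 0)" by (rule sum.inter_restrict) simp
        also have "\<dots> = (\<Sum>i<m. indicator {i. Q i \<omega>} i)" by (intro sum.cong refl) (simp add: indicator_def)
        finally show ?thesis by simp
      qed
    show "(real (card (Cset n (\<lambda>i. V i \<omega>) (\<lambda>i. Gm i \<omega>) t (interval_I \<kappa> x))) \<le> c) =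
         (\<forall>m\<in>UNIV. (\<Sum>i<m. indicator {i. Q i \<omega>} i) \<le> c)"
      unfolding eq[OF w] s using card_le_via_trunc[OF fin[OF w]] by simp
  qed
  also have "\<dots> \<in> sets M"
  proof (rule sets.sets_Collect_countable_All')
    fix m :: nat
    have "(\<lambda>\<omega>. (\<Sum>i<m. indicator {i. Q i \<omega>} i) :: real) \<in> borel_measurable M"
    proof -
      have "(\<lambda>\<omega>. (\<Sum>i<m. indicator {i. Q i \<omega>} i) :: real) = (\<lambda>\<omega>. \<Sum>i<m. if Q i \<omega> then 1 else 0)"
        by (intro ext sum.cong refl) (simp add: indicator_def)
      also have "\<dots> \<in> borel_measurable M" by measurable
      finally show ?thesis .
    qed
    thus "{\<omega> \<in> space M. (\<Sum>i<m. indicator {i. Q i \<omega>} i) \<le> c} \<in> sets M" by measurable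
  qed simp
  finally show ?thesis .
qed

lemma Good_meas:
  fixes M :: "'a measure"
  assumes V[measurable]: "\<And>i. V i \<in> borel_measurable M"
    and Gm[measurable]: "\<And>i. Gm i \<in> borel_measurable M"
    and nn: "\<And>i \<omega>. \<omega> \<in> space M \<Longrightarrow> V i \<omega> \<ge> 0"
    and n: "n \<ge> 1" and kap: "\<kappa> > 0" and T: "T \<ge> 0"
  shows "{\<omega>\<in>space M. \<forall>t\<in>{0..T}. \<forall>x\<ge>0. Rbar n (\<lambda>i. V i \<omega>) (\<lambda>i. Gm i \<omega>) t (interval_I \<kappa> x) \<le> \<epsilon>} \<in> sets M"
proof -
  have npos: "real n > 0" using n by simp
  let ?C = "\<lambda>\<omega> t x. real (card (Cset n (\<lambda>i. V i \<omega>) (\<lambda>i. Gm i \<omega>) t (interval_I \<kappa> x)))"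
  have R: "Rbar n (\<lambda>i. V i \<omega>) (\<lambda>i. Gm i \<omega>) t (interval_I \<kappa> x) \<le> \<epsilon> \<longleftrightarrow> ?C \<omega> t x \<le> \<epsilon> * real n"
    for \<omega> t x using npos by (simp add: Rbar_Cset divide_le_eq)
  define QQ where "QQ = insert T (\<rat> \<inter> {0..T}) \<times> (\<rat> \<inter> {0::real..})"
  have cQQ: "countable QQ" unfolding QQ_def
    by (intro countable_SIGMA countable_insert) (auto intro: countable_Int1 countable_rat)
  have "{\<omega>\<in>space M. \<forall>t\<in>{0..T}. \<forall>x\<ge>0. Rbar n (\<lambda>i. V i \<omega>) (\<lambda>i. Gm i \<omega>) t (interval_I \<kappa> x) \<le> \<epsilon>}
     = {\<omega>\<in>space M. \<forall>p\<in>QQ. ?C \<omega> (fst p) (snd p) \<le> \<epsilon> * real n}"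
  proof (intro Collect_cong conj_cong refl)
    fix \<omega> assume w: "\<omega> \<in> space M"
    have nn': "\<And>j. V j \<omega> \<ge> 0" using nn w by blast
    show "(\<forall>t\<in>{0..T}. \<forall>x\<ge>0. Rbar n (\<lambda>i. V i \<omega>) (\<lambda>i. Gm i \<omega>) t (interval_I \<kappa> x) \<le> \<epsilon>) =
          (\<forall>p\<in>QQ. ?C \<omega> (fst p) (snd p) \<le> \<epsilon> * real n)"
    proof
      assume a: "\<forall>t\<in>{0..T}. \<forall>x\<ge>0. Rbar n (\<lambda>i. V i \<omega>) (\<lambda>i. Gm i \<omega>) t (interval_I \<kappa> x) \<le> \<epsilon>"
      show "\<forall>p\<in>QQ. ?C \<omega> (fst p) (snd p) \<le> \<epsilon> * real n"
      proof
        fix p assume "p \<in> QQ"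
        hence "fst p \<in> {0..T}" "snd p \<ge> 0" using T by (auto simp: QQ_def)
        hence "Rbar n (\<lambda>i. V i \<omega>) (\<lambda>i. Gm i \<omega>) (fst p) (interval_I \<kappa> (snd p)) \<le> \<epsilon>"
          using a by blast
        thus "?C \<omega> (fst p) (snd p) \<le> \<epsilon> * real n" by (simp only: R)
      qed
    next
      assume a: "\<forall>p\<in>QQ. ?C \<omega> (fst p) (snd p) \<le> \<epsilon> * real n"
      show "\<forall>t\<in>{0..T}. \<forall>x\<ge>0. Rbar n (\<lambda>i. V i \<omega>) (\<lambda>i. Gm i \<omega>) t (interval_I \<kappa> x) \<le> \<epsilon>"
      proof (intro ballI allI impI)
        fix t0 x0 assume t0: "t0 \<in> {0..T}" and x0: "x0 \<ge> (0::real)"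
        obtain t x where tx: "t \<in> insert T (\<rat> \<inter> {0..T})" "x \<in> \<rat> \<inter> {0..}"
          "card (Cset n (\<lambda>i. V i \<omega>) (\<lambda>i. Gm i \<omega>) t0 (interval_I \<kappa> x0))
             \<le> card (Cset n (\<lambda>i. V i \<omega>) (\<lambda>i. Gm i \<omega>) t (interval_I \<kappa> x))"
          by (rule Cset_approx'[where v="\<lambda>i. V i \<omega>" and gs="\<lambda>i. Gm i \<omega>" and n=n, OF nn' n kap t0 x0])
        have "(t, x) \<in> QQ" unfolding QQ_def using tx(1,2) by (rule SigmaI)
        from bspec[OF a this] have "?C \<omega> t x \<le> \<epsilon> * real n" by simp
        hence "?C \<omega> t0 x0 \<le> \<epsilon> * real n" using tx(3) by linarith
        thus "Rbar n (\<lambda>i. V i \<omega>) (\<lambda>i. Gm i \<omega>) t0 (interval_I \<kappa> x0) \<le> \<epsilon>" by (simp only: R)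
      qed
    qed
  qed
  also have "\<dots> \<in> sets M"
    by (rule sets.sets_Collect_countable_All'[OF Cset_meas[OF V Gm nn] cQQ])
  finally show ?thesis .
qed


context prob_space begin

lemma hoeff_gen:
  fixes X :: "'i \<Rightarrow> 'a \<Rightarrow> real" and f :: "real \<Rightarrow> real" and e :: real
  assumes indep: "indep_vars (\<lambda>_. borel) X I" and fin: "finite I" and ne: "I \<noteq> {}"
    and iz: "iz \<in> I"
    and dist: "\<And>i. i \<in> I \<Longrightarrow> distr M borel (X i) = distr M borel (X iz)"
    and f[measurable]: "f \<in> borel_measurable borel" and fb: "\<And>y. a \<le> f y \<and> f y \<le> b"
    and ab: "a < b" and e: "e \<ge> 0"
  shows "prob {\<omega>\<in>space M. (\<Sum>i\<in>I. f (X i \<omega>)) / card I \<ge> expectation (\<lambda>\<omega>. f (X iz \<omega>)) + e}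
           \<le> exp (-2 * card I * e\<^sup>2 / (b - a)\<^sup>2)"
    and "prob {\<omega>\<in>space M. (\<Sum>i\<in>I. f (X i \<omega>)) / card I \<le> expectation (\<lambda>\<omega>. f (X iz \<omega>)) - e}
           \<le> exp (-2 * card I * e\<^sup>2 / (b - a)\<^sup>2)"
proof -
  have rv: "random_variable borel (X i)" if "i \<in> I" for i
    using indep that by (auto simp: indep_vars_def)
  note rv0[measurable] = rv[OF iz]
  have ind2: "indep_vars (\<lambda>_. borel) (\<lambda>i \<omega>. f (X i \<omega>)) I"
    by (rule indep_vars_compose2[OF indep]) simp
  have d2: "distr M borel (\<lambda>\<omega>. f (X i \<omega>)) = distr M borel (\<lambda>\<omega>. f (X iz \<omega>))" if "i \<in> I" for i
  proof -
    have "distr M borel (\<lambda>\<omega>. f (X i \<omega>)) = distr (distr M borel (X i)) borel f"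
      using rv[OF that] by (subst distr_distr) (auto simp: comp_def)
    also have "\<dots> = distr (distr M borel (X iz)) borel f" using dist[OF that] by simp
    also have "\<dots> = distr M borel (\<lambda>\<omega>. f (X iz \<omega>))"
      by (subst distr_distr) (auto simp: comp_def)
    finally show ?thesis .
  qed
  interpret H: Hoeffding_ineq_iid M I "\<lambda>i \<omega>. f (X i \<omega>)" "\<lambda>\<omega>. f (X iz \<omega>)" a b
    "expectation (\<lambda>\<omega>. f (X iz \<omega>))"
  proof unfold_locales
    show "finite I" by (rule fin)
    show "indep_vars (\<lambda>_. borel) (\<lambda>i \<omega>. f (X i \<omega>)) I" by (rule ind2)
    show "\<And>i. i \<in> I \<Longrightarrow> distr M borel (\<lambda>\<omega>. f (X i \<omega>)) = distr M borel (\<lambda>\<omega>. f (X iz \<omega>))"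
      by (rule d2)
    show "random_variable borel (\<lambda>\<omega>. f (X iz \<omega>))" by measurable
    show "AE x in M. f (X iz x) \<in> {a..b}" using fb by simp
  qed simp
  show "prob {\<omega>\<in>space M. (\<Sum>i\<in>I. f (X i \<omega>)) / card I \<ge> expectation (\<lambda>\<omega>. f (X iz \<omega>)) + e}
           \<le> exp (-2 * card I * e\<^sup>2 / (b - a)\<^sup>2)"
    using H.Hoeffding_ineq_ge'[of e] e ab ne by simp
  show "prob {\<omega>\<in>space M. (\<Sum>i\<in>I. f (X i \<omega>)) / card I \<le> expectation (\<lambda>\<omega>. f (X iz \<omega>)) - e}
           \<le> exp (-2 * card I * e\<^sup>2 / (b - a)\<^sup>2)"
    using H.Hoeffding_ineq_le'[of e] e ab ne by simp
qed

end


lemma G_choose: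
  assumes G: "real_distribution G" and cont: "\<And>x. measure G {x} = 0" and th: "\<theta> > 0"
  shows "\<exists>M0>0. \<exists>h0>0. measure G {M0<..} < \<theta> \<and>
     (\<forall>c\<ge>0. \<forall>h. 0 < h \<longrightarrow> h \<le> h0 \<longrightarrow> measure G {c<..c+2*h} < \<theta>)"
proof -
  interpret G: real_distribution G by (rule G)
  have "eventually (\<lambda>x. cdf G x > 1 - \<theta>) at_top"
    using G.cdf_lim_at_top_prob th by (intro order_tendstoD(1)) auto
  then obtain X where X: "\<And>x. x \<ge> X \<Longrightarrow> cdf G x > 1 - \<theta>" by (auto simp: eventually_at_top_linorder)
  define M0 where "M0 = max 1 X"
  have M0: "M0 > 0" by (simp add: M0_def)
  have tail: "measure G {M0<..} < \<theta>"
  proof -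
    have "{M0<..} = UNIV - {..M0}" by auto
    hence "measure G {M0<..} = 1 - cdf G M0"
      by (simp add: cdf_def G.prob_compl[symmetric] G.space_eq_univ)
    thus ?thesis using X[of M0] by (simp add: M0_def)
  qed
  have "continuous_on {0..M0+1} (cdf G)"
    using G.isCont_cdf cont by (intro continuous_at_imp_continuous_on) auto
  hence "uniformly_continuous_on {0..M0+1} (cdf G)"
    by (intro compact_uniformly_continuous) auto
  then obtain d where d: "d > 0" "\<And>x x'. x \<in> {0..M0+1} \<Longrightarrow> x' \<in> {0..M0+1} \<Longrightarrow> dist x' x < d \<Longrightarrow>
      dist (cdf G x') (cdf G x) < \<theta>"
    unfolding uniformly_continuous_on_def using th by metis
  define h0 where "h0 = min (1/2) (d/4)"
  have h0: "h0 > 0" using d by (simp add: h0_def)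
  have "\<forall>c\<ge>0. \<forall>h. 0 < h \<longrightarrow> h \<le> h0 \<longrightarrow> measure G {c<..c+2*h} < \<theta>"
  proof (intro allI impI)
    fix c h :: real assume c: "c \<ge> 0" and h: "0 < h" "h \<le> h0"
    show "measure G {c<..c+2*h} < \<theta>"
    proof (cases "c \<le> M0")
      case True
      have "measure G {c<..c+2*h} = cdf G (c+2*h) - cdf G c"
        using h by (subst G.cdf_diff_eq) auto
      also have "\<dots> \<le> dist (cdf G (c+2*h)) (cdf G c)" by (simp add: dist_real_def)
      also have "\<dots> < \<theta>" using True c h d by (intro d(2)) (auto simp: h0_def dist_real_def)
      finally show ?thesis .
    next
      case False
      have "measure G {c<..c+2*h} \<le> measure G {M0<..}"
        using False by (intro G.finite_measure_mono) auto
      thus ?thesis using tail by simp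
    qed
  qed
  thus ?thesis using M0 h0 tail by blast
qed

lemma grid_G:
  assumes G: "real_distribution G" and M0: "measure G {M0<..} < \<theta>"
    and hb: "\<forall>c\<ge>0. measure G {c<..c+2*h} < \<theta>" and h: "h > 0"
    and J: "real J * h \<ge> M0"
  shows "j \<le> J \<Longrightarrow> measure G (Ig h J j) < \<theta>"
proof -
  interpret G: real_distribution G by (rule G)
  assume j: "j \<le> J"
  show ?thesis
  proof (cases "j < J")
    case True
    have "Ig h J j = {real j * h <.. real j * h + 2 * h}" using True by (simp add: Ig_def algebra_simps)
    thus ?thesis using hb h by simp
  next
    case False
    have "measure G (Ig h J j) \<le> measure G {M0<..}"
      using False J by (intro G.finite_measure_mono) (auto simp: Ig_def)
    thus ?thesis using M0 by simp
  qed
qed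

lemma rd_cdf_diff: "real_distribution H \<Longrightarrow> a < b \<Longrightarrow> cdf H b - cdf H a = measure H {a<..b}"
proof -
  assume "real_distribution H" "a < b"
  interpret H: real_distribution H by fact
  show ?thesis using H.cdf_diff_eq[OF \<open>a < b\<close>] .
qed

lemma weak_conv_intervals:
  assumes Gn: "\<And>n. n \<ge> 1 \<Longrightarrow> real_distribution (Gn n)" and G: "real_distribution G"
    and cont: "\<And>x. measure G {x} = 0" and wc: "weak_conv_m Gn G"
  shows "a < b \<Longrightarrow> (\<lambda>n. measure (Gn n) {a<..b}) \<longlonglongrightarrow> measure G {a<..b}"
    and "(\<lambda>n. measure (Gn n) {a<..}) \<longlonglongrightarrow> measure G {a<..}"
proof -
  interpret G: real_distribution G by (rule G)
  have cd: "(\<lambda>n. cdf (Gn n) x) \<longlonglongrightarrow> cdf G x" for x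
    using wc G.isCont_cdf cont unfolding weak_conv_m_def weak_conv_def by blast
  have ev: "eventually (\<lambda>n. n \<ge> 1) sequentially" by (rule eventually_ge_at_top)
  {
    assume ab: "a < b"
    have "eventually (\<lambda>n. cdf (Gn n) b - cdf (Gn n) a = measure (Gn n) {a<..b}) sequentially"
      using ev by eventually_elim (use ab Gn rd_cdf_diff in blast)
    moreover have "(\<lambda>n. cdf (Gn n) b - cdf (Gn n) a) \<longlonglongrightarrow> cdf G b - cdf G a"
      by (intro tendsto_diff cd)
    ultimately have "(\<lambda>n. measure (Gn n) {a<..b}) \<longlonglongrightarrow> cdf G b - cdf G a"
      by (rule Lim_transform_eventually[rotated])
    thus "(\<lambda>n. measure (Gn n) {a<..b}) \<longlonglongrightarrow> measure G {a<..b}"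
      using G.cdf_diff_eq[OF ab] by simp
  }
  have cpl: "measure H {a<..} = 1 - cdf H a" if "real_distribution H" for H
  proof -
    interpret H: real_distribution H by (rule that)
    have "{a<..} = UNIV - {..a}" by auto
    thus ?thesis by (simp add: cdf_def H.prob_compl[symmetric] H.space_eq_univ)
  qed
  have "eventually (\<lambda>n. 1 - cdf (Gn n) a = measure (Gn n) {a<..}) sequentially"
    using ev by eventually_elim (use Gn cpl in metis)
  moreover have "(\<lambda>n. 1 - cdf (Gn n) a) \<longlonglongrightarrow> 1 - cdf G a"
    by (intro tendsto_diff cd tendsto_const)
  ultimately have "(\<lambda>n. measure (Gn n) {a<..}) \<longlonglongrightarrow> 1 - cdf G a"
    by (rule Lim_transform_eventually[rotated])
  thus "(\<lambda>n. measure (Gn n) {a<..}) \<longlonglongrightarrow> measure G {a<..}"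
    using cpl[OF G] by simp
qed

context prob_space begin

lemma trunc_tendsto:
  assumes V[measurable]: "V \<in> borel_measurable M" and int: "integrable M V"
  shows "(\<lambda>B::nat. expectation (\<lambda>\<omega>. max 0 (V \<omega> - real B))) \<longlonglongrightarrow> 0"
proof -
  have "(\<lambda>B::nat. expectation (\<lambda>\<omega>. max 0 (V \<omega> - real B))) \<longlonglongrightarrow> expectation (\<lambda>\<omega>. 0::real)"
  proof (rule integral_dominated_convergence[where w="\<lambda>\<omega>. \<bar>V \<omega>\<bar>"])
    show "integrable M (\<lambda>\<omega>. \<bar>V \<omega>\<bar>)" using int by simp
    show "AE x in M. (\<lambda>i. max 0 (V x - real i)) \<longlonglongrightarrow> 0"
    proof (rule AE_I2)
      fix x
      have "eventually (\<lambda>i. max 0 (V x - real i) = 0) sequentially"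
      proof -
        obtain N :: nat where "V x \<le> real N" using real_arch_simple by blast
        thus ?thesis by (intro eventually_sequentiallyI[of N]) auto
      qed
      thus "(\<lambda>i. max 0 (V x - real i)) \<longlonglongrightarrow> 0" by (rule tendsto_eventually)
    qed
    show "\<And>i. AE x in M. norm (max 0 (V x - real i)) \<le> \<bar>V x\<bar>" by auto
  qed auto
  thus ?thesis by simp
qed

lemma ident_integral:
  assumes X[measurable]: "X \<in> borel_measurable M" and Y[measurable]: "Y \<in> borel_measurable M"
    and d: "distr M borel X = distr M borel Y" and f[measurable]: "f \<in> borel_measurable borel"
  shows "expectation (\<lambda>\<omega>. f (X \<omega>)) = expectation (\<lambda>\<omega>. f (Y \<omega>))"
    and "integrable M (\<lambda>\<omega>. f (X \<omega>)) \<longleftrightarrow> integrable M (\<lambda>\<omega>. (f (Y \<omega>)::real))"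
proof -
  show "expectation (\<lambda>\<omega>. f (X \<omega>)) = expectation (\<lambda>\<omega>. f (Y \<omega>))"
    using integral_distr[of X M borel f] integral_distr[of Y M borel f] d by simp
  show "integrable M (\<lambda>\<omega>. f (X \<omega>)) \<longleftrightarrow> integrable M (\<lambda>\<omega>. (f (Y \<omega>)::real))"
    using integrable_distr_eq[of X M borel f] integrable_distr_eq[of Y M borel f] d by simp
qed

end


lemma sum_ind_card:
  assumes "finite A"
  shows "(\<Sum>i\<in>A. indicator S (gam i) :: real) = real (card {i\<in>A. gam i \<in> S})"
proof -
  have "(\<Sum>i\<in>A. indicator S (gam i) :: real) = (\<Sum>i\<in>A. if i \<in> {i\<in>A. gam i \<in> S} then 1 else 0)"
    by (intro sum.cong refl) (auto simp: indicator_def)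
  also have "\<dots> = (\<Sum>i\<in>A \<inter> {i\<in>A. gam i \<in> S}. 1)"
    by (rule sum.inter_restrict[symmetric]) (rule assms)
  also have "A \<inter> {i\<in>A. gam i \<in> S} = {i\<in>A. gam i \<in> S}" by blast
  finally show ?thesis by simp
qed

lemma sum_Pair: "(\<Sum>p\<in>{k}\<times>A. F p) = (\<Sum>i\<in>A. F (k,i))"
proof -
  have "{k}\<times>A = Pair k ` A" by auto
  moreover have "inj_on (Pair k) A" by (auto simp: inj_on_def)
  ultimately show ?thesis by (simp add: sum.reindex)
qed

lemma Ig_borel[measurable]: "Ig h J j \<in> sets borel"
  by (simp add: Ig_def)

context prob_space begin

lemma fixed_n:
  fixes V :: "nat \<Rightarrow> 'a \<Rightarrow> real" and gg :: "nat \<times> nat \<Rightarrow> 'a \<Rightarrow> real" and Gd :: "real measure"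
    and n q b L J k K :: nat and h Bn \<theta> C0 \<mu>B eB T \<epsilon> \<eta> :: real
  assumes Vind: "indep_vars (\<lambda>_. borel) V UNIV"
    and Vid: "\<And>i. distr M borel (V i) = distr M borel (V 0)"
    and Vpos: "\<And>i \<omega>. \<omega> \<in> space M \<Longrightarrow> V i \<omega> > 0"
    and Vint: "integrable M (V 0)"
    and gind: "indep_vars (\<lambda>_. borel) gg ({..<K} \<times> UNIV)"
    and k: "k < K"
    and gd: "\<And>i. distr M borel (gg (k,i)) = Gd"
    and gpos: "\<And>i \<omega>. \<omega> \<in> space M \<Longrightarrow> gg (k,i) \<omega> > 0"
    and Gdb: "\<And>j. j \<le> J \<Longrightarrow> measure Gd (Ig h J j) < \<theta>"
    and n: "n \<ge> 1" and b: "b = n div q" "b \<ge> 1" and q: "q \<ge> 1" and L: "L \<ge> 1" and J: "J \<ge> 1"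
    and h: "h > 0" and Bn: "Bn > 0" and th: "\<theta> > 0" and T: "T > 0"
    and muB_def: "\<mu>B = expectation (\<lambda>\<omega>. max 0 (min (V 0 \<omega>) Bn))"
    and eB_def: "eB = expectation (\<lambda>\<omega>. max 0 (V 0 \<omega> - Bn))"
    and muB: "\<mu>B > 0" and LB: "4 * real q * T \<le> real L * \<mu>B"
    and Lq: "real L \<le> C0 * real q" and eps: "2 * \<theta> * C0 \<le> \<epsilon>"
    and Bq: "4 * Bn \<le> h * real q"
    and mark: "4 * C0 * eB / h \<le> \<eta> / 2"
    and tail: "exp (-2 * real (L*b) * (\<mu>B/2)\<^sup>2 / Bn\<^sup>2) + real (L*(J+1)) * exp (-2 * real b * \<theta>\<^sup>2) \<le> \<eta> / 2"
  shows "prob {\<omega>\<in>space M. \<forall>t\<in>{0..T}. \<forall>x\<ge>0.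
     Rbar n (\<lambda>i. V i \<omega>) (\<lambda>i. gg (k,i) \<omega>) t (interval_I (h/4) x) \<le> \<epsilon>} \<ge> 1 - \<eta>"
proof -
  have Vm[measurable]: "V i \<in> borel_measurable M" for i
    using Vind by (auto simp: indep_vars_def)
  have ggm[measurable]: "gg p \<in> borel_measurable M" if "p \<in> {..<K} \<times> UNIV" for p
    using gind that by (auto simp: indep_vars_def)
  have ggkm[measurable]: "gg (k,i) \<in> borel_measurable M" for i using ggm k by simp
  have npos: "real n > 0" using n by simp
  have qb: "real q * real b \<le> real n"
  proof -
    have "q * b \<le> n" using b(1) by (simp add: mult.commute)
    thus ?thesis by (metis of_nat_le_iff of_nat_mult)
  qed
  have nlt: "real n < 2 * real q * real b"
  proof -
    have "n = q * b + n mod q" using b(1) by simp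
    moreover have "n mod q < q" using q by simp
    ultimately have "n < q * b + q" by linarith
    also have "\<dots> \<le> 2 * q * b" using b(2) by simp
    finally show ?thesis by (metis of_nat_less_iff of_nat_mult of_nat_numeral)
  qed
  have "real L \<ge> 1" using L by simp
  hence "1 \<le> C0 * real q" using Lq by linarith
  hence C0pos: "C0 > 0" by (smt (verit) mult_nonpos_nonneg of_nat_0_le_iff)
  have Lbn: "real L * real b \<le> C0 * real n"
  proof -
    have "real L * real b \<le> C0 * real q * real b" using Lq by (intro mult_right_mono) auto
    also have "\<dots> \<le> C0 * real n" using qb C0pos by (simp add: mult.assoc)
    finally show ?thesis .
  qed
  define f where "f y = max 0 (min y Bn)" for y :: real
  define A1 where "A1 = {\<omega>\<in>space M. (\<Sum>i\<in>{..<L*b}. f (V i \<omega>)) / real (card {..<L*b}) \<le> expectation (\<lambda>\<omega>. f (V 0 \<omega>)) - \<mu>B/2}"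
  define Z where "Z \<omega> = (\<Sum>j<L*b. max 0 (V j \<omega> - Bn))" for \<omega>
  define A2 where "A2 = {\<omega>\<in>space M. Z \<omega> \<ge> real n * h / 4}"
  define A3 where "A3 p = {\<omega>\<in>space M. (\<Sum>i\<in>{fst p*b..<Suc (fst p)*b}. indicator (Ig h J (snd p)) (gg (k,i) \<omega>)) / real b
       \<ge> measure Gd (Ig h J (snd p)) + \<theta>}" for p
  define PP where "PP = {..<L} \<times> {..J}"
  define A3u where "A3u = (\<Union>p\<in>PP. A3 p)"
  have fm[measurable]: "f \<in> borel_measurable borel" unfolding f_def by measurable
  have A1s: "A1 \<in> sets M" unfolding A1_def by measurable
  have A2s: "A2 \<in> sets M" unfolding A2_def Z_def by measurable
  have A3s: "A3 p \<in> sets M" for p unfolding A3_def by measurable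
  have A3us: "A3u \<in> sets M" unfolding A3u_def PP_def using A3s by (intro sets.finite_UN) auto
  have P1: "prob A1 \<le> exp (-2 * real (L*b) * (\<mu>B/2)\<^sup>2 / Bn\<^sup>2)"
  proof -
    have ind1: "indep_vars (\<lambda>_. borel) V {..<L*b}" by (rule indep_vars_subset[OF Vind]) auto
    have ne1: "{..<L*b} \<noteq> {}" using L b(2) by (auto simp: lessThan_empty_iff)
    have Lb0: "0 < L*b" using L b(2) by simp
    have "prob A1 \<le> exp (- (2 * real (card {..<L*b}) * (\<mu>B/2)\<^sup>2 / (Bn - 0)\<^sup>2))"
      unfolding A1_def
      using hoeff_gen(2)[where X=V and I="{..<L*b}" and iz=0 and f=f and a=0 and b=Bn and e="\<mu>B/2",
            OF ind1 _ ne1 _ _ fm _ Bn] Vid Lb0 muB less_imp_le[OF Bn] by (auto simp: f_def)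
    thus ?thesis by simp
  qed
  have P2: "prob A2 \<le> \<eta> / 2 - 0"
  proof -
    have int0: "integrable M (\<lambda>\<omega>. max 0 (V 0 \<omega> - Bn))" using Vint by auto
    have intj: "integrable M (\<lambda>\<omega>. max 0 (V j \<omega> - Bn))" for j
      using ident_integral(2)[OF Vm Vm Vid[of j], of "\<lambda>y. max 0 (y - Bn)"] int0 by simp
    have ej: "expectation (\<lambda>\<omega>. max 0 (V j \<omega> - Bn)) = eB" for j
      using ident_integral(1)[OF Vm Vm Vid[of j], of "\<lambda>y. max 0 (y - Bn)"] by (simp add: eB_def)
    have Zint: "integrable M Z" unfolding Z_def by (rule Bochner_Integration.integrable_sum) (rule intj)
    have EZ: "expectation Z = real (L*b) * eB"
    proof -
      have "expectation Z = (\<Sum>j<L*b. expectation (\<lambda>\<omega>. max 0 (V j \<omega> - Bn)))"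
        unfolding Z_def by (rule Bochner_Integration.integral_sum) (rule intj)
      also have "\<dots> = (\<Sum>j<L*b. eB)" by (simp add: ej)
      finally show ?thesis by simp
    qed
    have eB0: "eB \<ge> 0" unfolding eB_def by (intro integral_nonneg_AE) auto
    have c0: "0 < real n * h / 4" using npos h by simp
    have "prob A2 \<le> expectation Z / (real n * h / 4)"
      unfolding A2_def
      by (rule integral_Markov_inequality_measure[OF Zint _ _ c0]) (auto simp: Z_def intro!: sum_nonneg AE_I2)
    also have "\<dots> \<le> C0 * real n * eB / (real n * h / 4)"
    proof (rule divide_right_mono)
      have "real (L*b) * eB \<le> C0 * real n * eB" using Lbn eB0 by (intro mult_right_mono) auto
      thus "expectation Z \<le> C0 * real n * eB" using EZ by simp
    qed (use c0 in simp)
    also have "\<dots> = 4 * C0 * eB / h" using npos h by (simp add: field_simps)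
    finally show ?thesis using mark by simp
  qed
  have P3: "prob (A3 p) \<le> exp (-2 * real b * \<theta>\<^sup>2)" if "p \<in> PP" for p
  proof -
    obtain l j where p: "p = (l, j)" by (cases p)
    define I where "I = {k} \<times> {l*b..<Suc l*b}"
    have indI: "indep_vars (\<lambda>_. borel) gg I" by (rule indep_vars_subset[OF gind]) (use k in \<open>auto simp: I_def\<close>)
    have cardI: "card I = b" by (simp add: I_def card_cartesian_product_singleton)
    have neI: "I \<noteq> {}" using cardI b(2) by auto
    have finI: "finite I" by (simp add: I_def)
    have i0: "(k, l*b) \<in> I" using b(2) by (simp add: I_def)
    have distI: "distr M borel (gg pp) = distr M borel (gg (k, l*b))" if "pp \<in> I" for pp
      using that gd by (auto simp: I_def)
    have fI: "(indicator (Ig h J j) :: real \<Rightarrow> real) \<in> borel_measurable borel" by measurable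
    have expI: "expectation (\<lambda>\<omega>. indicator (Ig h J j) (gg (k, l*b) \<omega>) :: real) = measure Gd (Ig h J j)"
    proof -
      have "expectation (\<lambda>\<omega>. indicator (Ig h J j) (gg (k, l*b) \<omega>) :: real) =
            integral\<^sup>L (distr M borel (gg (k, l*b))) (indicator (Ig h J j))"
        using integral_distr[of "gg (k,l*b)" M borel "indicator (Ig h J j) :: real \<Rightarrow> real"] by simp
      also have "\<dots> = measure (distr M borel (gg (k, l*b))) (Ig h J j)" by simp
      also have "\<dots> = measure Gd (Ig h J j)" by (simp only: gd)
      finally show ?thesis .
    qed
    have "prob {\<omega>\<in>space M. (\<Sum>i\<in>I. indicator (Ig h J j) (gg i \<omega>)) / card I \<ge>
             expectation (\<lambda>\<omega>. indicator (Ig h J j) (gg (k, l*b) \<omega>)) + \<theta>}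
          \<le> exp (- (2 * real (card I) * \<theta>\<^sup>2 / (1 - 0)\<^sup>2))"
      using hoeff_gen(1)[where X=gg and I=I and iz="(k,l*b)" and f="indicator (Ig h J j)" and a=0 and b=1 and e=\<theta>,
            OF indI finI neI i0 _ fI] distI th by (auto simp: indicator_def)
    moreover have "{\<omega>\<in>space M. (\<Sum>i\<in>I. indicator (Ig h J j) (gg i \<omega>)) / card I \<ge>
             expectation (\<lambda>\<omega>. indicator (Ig h J j) (gg (k, l*b) \<omega>)) + \<theta>} = A3 p"
      unfolding A3_def p expI cardI I_def sum_Pair by simp
    ultimately show ?thesis using cardI by simp
  qed
  have P3u: "prob A3u \<le> real (L*(J+1)) * exp (-2 * real b * \<theta>\<^sup>2)"
  proof -
    have "prob A3u \<le> (\<Sum>p\<in>PP. prob (A3 p))" unfolding A3u_def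
      by (rule finite_measure_subadditive_finite) (auto simp: PP_def A3s)
    also have "\<dots> \<le> (\<Sum>p\<in>PP. exp (-2 * real b * \<theta>\<^sup>2))" by (intro sum_mono P3)
    also have "\<dots> = real (L*(J+1)) * exp (-2 * real b * \<theta>\<^sup>2)" by (simp add: PP_def)
    finally show ?thesis .
  qed
  have Pbad: "prob (A1 \<union> A2 \<union> A3u) \<le> \<eta>"
  proof -
    have "prob (A1 \<union> A2 \<union> A3u) \<le> prob (A1 \<union> A2) + prob A3u"
      by (rule measure_subadditive) (auto simp: A1s A2s A3us)
    moreover have "prob (A1 \<union> A2) \<le> prob A1 + prob A2"
      by (rule measure_subadditive) (auto simp: A1s A2s)
    ultimately have "prob (A1 \<union> A2 \<union> A3u) \<le> prob A1 + prob A2 + prob A3u" by linarith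
    thus ?thesis using P1 P2 P3u tail by linarith
  qed
  define Good where "Good = {\<omega>\<in>space M. \<forall>t\<in>{0..T}. \<forall>x\<ge>0.
     Rbar n (\<lambda>i. V i \<omega>) (\<lambda>i. gg (k,i) \<omega>) t (interval_I (h/4) x) \<le> \<epsilon>}"
  have Goods: "Good \<in> sets M" unfolding Good_def
    by (rule Good_meas) (use Vpos less_imp_le n h T in auto)
  have sub: "space M - (A1 \<union> A2 \<union> A3u) \<subseteq> Good"
  proof
    fix \<omega> assume w: "\<omega> \<in> space M - (A1 \<union> A2 \<union> A3u)"
    hence ws: "\<omega> \<in> space M" and nA1: "\<omega> \<notin> A1" and nA2: "\<omega> \<notin> A2" and nA3: "\<omega> \<notin> A3u" by auto
    have vp: "\<And>j. V j \<omega> > 0" using Vpos ws by blast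
    have gp: "\<And>j. gg (k,j) \<omega> > 0" using gpos ws by blast
    have vnn: "\<And>j. V j \<omega> \<ge> 0" using vp less_imp_le by blast
    have Lb0: "real (L*b) > 0" using L b(2) by simp
    have "\<not> ((\<Sum>i\<in>{..<L*b}. f (V i \<omega>)) / real (L*b) \<le> \<mu>B - \<mu>B/2)"
      using nA1 ws by (simp add: A1_def muB_def f_def)
    hence "(\<Sum>i\<in>{..<L*b}. f (V i \<omega>)) / real (L*b) > \<mu>B / 2" by simp
    hence s1: "(\<Sum>i\<in>{..<L*b}. f (V i \<omega>)) > real (L*b) * (\<mu>B / 2)"
      using Lb0 by (simp add: pos_less_divide_eq mult.commute)
    have "(\<Sum>i\<in>{..<L*b}. f (V i \<omega>)) \<le> (\<Sum>i<L*b. V i \<omega>)"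
      by (intro sum_mono) (use vnn in \<open>auto simp: f_def\<close>)
    moreover have "real n * T < real (L*b) * (\<mu>B / 2)"
    proof -
      have "real n * T < 2 * real q * real b * T" using nlt T by simp
      also have "\<dots> = (4 * real q * T) * (real b / 2)" by simp
      also have "\<dots> \<le> (real L * \<mu>B) * (real b / 2)" using LB b(2) by (intro mult_right_mono) auto
      also have "\<dots> = real (L*b) * (\<mu>B / 2)" by simp
      finally show ?thesis .
    qed
    ultimately have E1: "(\<Sum>i<L*b. V i \<omega>) > real n * T" using s1 by linarith
    have Zl: "Z \<omega> < real n * h / 4" using nA2 ws by (simp add: A2_def)
    have E2: "(\<Sum>j\<in>{l*b..<Suc l*b}. V j \<omega>) \<le> real n * h / 2" if l: "l < L" for l
    proof -
      have "(\<Sum>j\<in>{l*b..<Suc l*b}. V j \<omega>) \<le> (\<Sum>j\<in>{l*b..<Suc l*b}. Bn + max 0 (V j \<omega> - Bn))"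
        by (intro sum_mono) auto
      also have "\<dots> = real b * Bn + (\<Sum>j\<in>{l*b..<Suc l*b}. max 0 (V j \<omega> - Bn))"
        by (simp add: sum.distrib)
      also have "(\<Sum>j\<in>{l*b..<Suc l*b}. max 0 (V j \<omega> - Bn)) \<le> Z \<omega>"
      proof -
        have "Suc l * b \<le> L * b" using l by (intro mult_right_mono) auto
        hence "{l*b..<Suc l*b} \<subseteq> {..<L*b}" by auto
        thus ?thesis unfolding Z_def by (intro sum_mono2) auto
      qed
      also have "real b * Bn \<le> real n * h / 4"
      proof -
        have "4 * Bn * real b \<le> h * real q * real b" using Bq by (intro mult_right_mono) auto
        also have "\<dots> \<le> h * real n" using qb h by (simp add: mult.assoc)
        finally show ?thesis by (simp add: algebra_simps)
      qed
      finally show ?thesis using Zl by simp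
    qed
    have E3: "real (card {i\<in>{l*b..<Suc l*b}. gg (k,i) \<omega> \<in> Ig h J j}) \<le> 2 * real b * \<theta>"
      if l: "l < L" and j: "j \<le> J" for l j
    proof -
      have "(l, j) \<in> PP" using l j by (simp add: PP_def)
      hence "\<omega> \<notin> A3 (l, j)" using nA3 by (auto simp: A3u_def)
      hence "(\<Sum>i\<in>{l*b..<Suc l*b}. indicator (Ig h J j) (gg (k,i) \<omega>)) / real b < measure Gd (Ig h J j) + \<theta>"
        using ws by (simp add: A3_def)
      also have "\<dots> < 2 * \<theta>" using Gdb[OF j] by simp
      finally have "(\<Sum>i\<in>{l*b..<Suc l*b}. indicator (Ig h J j) (gg (k,i) \<omega>)) < 2 * \<theta> * real b"
        using b(2) by (simp add: divide_less_eq)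
      thus ?thesis by (simp add: sum_ind_card mult.commute mult.left_commute)
    qed
    have "\<forall>t\<in>{0..T}. \<forall>x\<ge>0. Rbar n (\<lambda>i. V i \<omega>) (\<lambda>i. gg (k,i) \<omega>) t (interval_I (h/4) x) \<le> \<epsilon>"
    proof (intro ballI allI impI)
      fix t x :: real assume t: "t \<in> {0..T}" and x: "x \<ge> 0"
      have cb: "real (card {i. i < renewal_count (\<lambda>i. V i \<omega>) (real n * t) \<and>
        residual (gg (k,i) \<omega>) ((\<Sum>j\<le>i. V j \<omega>) / real n) t > 0 \<and>
        residual (gg (k,i) \<omega>) ((\<Sum>j\<le>i. V j \<omega>) / real n) t \<in> interval_I (h/4) x}) \<le> real L * (2 * real b * \<theta>)"
        by (rule det_bound[where v="\<lambda>i. V i \<omega>" and gam="\<lambda>i. gg (k,i) \<omega>", OF vp gp n b(2) h J E1 E2 E3 t x])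
      have "real L * (2 * real b * \<theta>) = 2 * \<theta> * (real L * real b)" by simp
      also have "\<dots> \<le> 2 * \<theta> * (C0 * real n)" using Lbn th by (intro mult_left_mono) auto
      also have "\<dots> \<le> \<epsilon> * real n" using eps npos by (simp add: mult.assoc[symmetric] mult_right_mono)
      finally have "real (card {i. i < renewal_count (\<lambda>i. V i \<omega>) (real n * t) \<and>
        residual (gg (k,i) \<omega>) ((\<Sum>j\<le>i. V j \<omega>) / real n) t > 0 \<and>
        residual (gg (k,i) \<omega>) ((\<Sum>j\<le>i. V j \<omega>) / real n) t \<in> interval_I (h/4) x}) \<le> \<epsilon> * real n"
        using cb by linarith
      thus "Rbar n (\<lambda>i. V i \<omega>) (\<lambda>i. gg (k,i) \<omega>) t (interval_I (h/4) x) \<le> \<epsilon>"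
        unfolding Rbar_def using npos by (simp add: divide_le_eq mult.commute)
    qed
    thus "\<omega> \<in> Good" using ws by (simp add: Good_def)
  qed
  have "1 - \<eta> \<le> prob (space M - (A1 \<union> A2 \<union> A3u))"
    using Pbad prob_compl[of "A1 \<union> A2 \<union> A3u"] A1s A2s A3us by simp
  also have "\<dots> \<le> prob Good" using sub Goods by (intro finite_measure_mono)
  finally show ?thesis by (simp add: Good_def)
qed

end

lemma ev_div_ge:
  assumes q: "q \<ge> (1::nat)"
  shows "eventually (\<lambda>n. real (n div q) \<ge> X) sequentially"
proof (rule eventually_sequentiallyI[of "q * nat \<lceil>X\<rceil>"])
  fix n assume n: "q * nat \<lceil>X\<rceil> \<le> n"
  have "nat \<lceil>X\<rceil> = (q * nat \<lceil>X\<rceil>) div q" using q by simp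
  also have "\<dots> \<le> n div q" using n by (rule div_le_mono)
  finally have "real (nat \<lceil>X\<rceil>) \<le> real (n div q)" by simp
  moreover have "X \<le> real (nat \<lceil>X\<rceil>)" by linarith
  ultimately show "X \<le> real (n div q)" by linarith
qed

lemma exp_small:
  fixes c d x :: real
  assumes c: "c > 0" and d: "d > 0" and x: "x \<ge> - ln d / c"
  shows "exp (- c * x) \<le> d"
proof -
  have "- ln d \<le> x * c" using x by (subst (asm) pos_divide_le_eq[OF c])
  hence "- c * x \<le> ln d" by (simp add: mult.commute)
  hence "exp (- c * x) \<le> exp (ln d)" by simp
  thus ?thesis using d by simp
qed

context prob_space begin

lemma per_k:
  fixes V :: "nat \<Rightarrow> 'a \<Rightarrow> real" and g :: "nat \<Rightarrow> nat \<Rightarrow> nat \<Rightarrow> 'a \<Rightarrow> real"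
    and Gn :: "nat \<Rightarrow> real measure" and G :: "real measure" and K k :: nat and T \<epsilon> \<eta> :: real
  assumes Vind: "indep_vars (\<lambda>_. borel) V UNIV"
    and Vid: "\<And>i. distr M borel (V i) = distr M borel (V 0)"
    and Vpos: "\<And>i \<omega>. \<omega> \<in> space M \<Longrightarrow> V i \<omega> > 0"
    and Vint: "integrable M (V 0)"
    and mu: "expectation (V 0) > 0"
    and G: "real_distribution G" and Gc: "\<And>x. measure G {x} = 0"
    and Gn: "\<And>n. n \<ge> 1 \<Longrightarrow> real_distribution (Gn n)"
    and gind: "\<And>n. n \<ge> 1 \<Longrightarrow> indep_vars (\<lambda>_. borel) (\<lambda>(k', i). g n k' i) ({..<K} \<times> UNIV)"
    and gd: "\<And>n i. n \<ge> 1 \<Longrightarrow> distr M borel (g n k i) = Gn n"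
    and gpos: "\<And>n i \<omega>. n \<ge> 1 \<Longrightarrow> \<omega> \<in> space M \<Longrightarrow> g n k i \<omega> > 0"
    and k: "k < K" and wc: "weak_conv_m Gn G"
    and T: "T > 0" and eps: "\<epsilon> > 0" and eta: "\<eta> > 0"
  shows "\<exists>h0>0. \<forall>h. 0 < h \<longrightarrow> h \<le> h0 \<longrightarrow> (\<forall>\<^sub>F n in sequentially.
     prob {\<omega>\<in>space M. \<forall>t\<in>{0..T}. \<forall>x\<ge>0. Rbar n (\<lambda>i. V i \<omega>) (\<lambda>i. g n k i \<omega>) t (interval_I (h/4) x) \<le> \<epsilon>}
       \<ge> 1 - \<eta>)"
proof -
  have Vm[measurable]: "V i \<in> borel_measurable M" for i
    using Vind by (auto simp: indep_vars_def)
  define \<mu> where "\<mu> = expectation (V 0)"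
  have mu': "\<mu> > 0" using mu by (simp add: \<mu>_def)
  define C0 where "C0 = 8 * T / \<mu> + 1"
  have C0: "C0 > 0" using T mu' by (simp add: C0_def add_pos_pos)
  define \<theta> where "\<theta> = \<epsilon> / (2 * C0)"
  have th: "\<theta> > 0" using eps C0 by (simp add: \<theta>_def)
  from G_choose[OF G Gc th] obtain M0 h0 where M0: "M0 > 0" and h0: "h0 > 0" and tailG: "measure G {M0<..} < \<theta>"
    and hb': "\<forall>c\<ge>0. \<forall>h. 0 < h \<longrightarrow> h \<le> h0 \<longrightarrow> measure G {c<..c+2*h} < \<theta>"
    by blast
  have hbG: "\<And>c h. c \<ge> 0 \<Longrightarrow> 0 < h \<Longrightarrow> h \<le> h0 \<Longrightarrow> measure G {c<..c+2*h} < \<theta>"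
    using hb' by blast
  show ?thesis
  proof (intro exI[of _ h0] conjI allI impI h0)
    fix h :: real assume h: "0 < h" and hh0: "h \<le> h0"
    define J where "J = nat \<lceil>M0 / h\<rceil> + 1"
    have J1: "J \<ge> 1" by (simp add: J_def)
    have JM: "real J * h \<ge> M0"
    proof -
      have "M0 / h \<le> real J" unfolding J_def by linarith
      thus ?thesis using h by (simp add: divide_le_eq)
    qed
    have GJ: "measure G (Ig h J j) < \<theta>" if "j \<le> J" for j
      by (rule grid_G[OF G tailG _ h JM that]) (use hbG h hh0 in auto)
    have evG: "\<forall>\<^sub>F n in sequentially. \<forall>j\<in>{..J}. measure (Gn n) (Ig h J j) < \<theta>"
    proof (rule eventually_ball_finite)
      show "finite {..J}" by simp
      show "\<forall>j\<in>{..J}. \<forall>\<^sub>F n in sequentially. measure (Gn n) (Ig h J j) < \<theta>"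
      proof
        fix j assume "j \<in> {..J}"
        hence j: "j \<le> J" by simp
        have "(\<lambda>n. measure (Gn n) (Ig h J j)) \<longlonglongrightarrow> measure G (Ig h J j)"
        proof (cases "j < J")
          case True
          have "real j * h < (real j + 2) * h" using h by (simp add: distrib_right)
          thus ?thesis using True weak_conv_intervals(1)[OF Gn G Gc wc] by (simp add: Ig_def)
        next
          case False
          thus ?thesis using weak_conv_intervals(2)[OF Gn G Gc wc] by (simp add: Ig_def)
        qed
        thus "\<forall>\<^sub>F n in sequentially. measure (Gn n) (Ig h J j) < \<theta>"
          using GJ[OF j] by (rule order_tendstoD(2))
      qed
    qed
    define tgt where "tgt = min (\<mu> / 2) (\<eta> * h / (8 * C0))"
    have tgt: "tgt > 0" using mu' eta h C0 by (simp add: tgt_def)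
    have "\<forall>\<^sub>F B in sequentially. expectation (\<lambda>\<omega>. max 0 (V 0 \<omega> - real B)) < tgt"
      using trunc_tendsto[OF Vm Vint] tgt by (rule order_tendstoD(2))
    moreover have "\<forall>\<^sub>F B in sequentially. (1::nat) \<le> B" by (rule eventually_ge_at_top)
    ultimately have "\<forall>\<^sub>F B in sequentially. expectation (\<lambda>\<omega>. max 0 (V 0 \<omega> - real B)) < tgt \<and> 1 \<le> B"
      by (rule eventually_conj)
    then obtain N :: nat where N: "\<forall>B\<ge>N. expectation (\<lambda>\<omega>. max 0 (V 0 \<omega> - real B)) < tgt \<and> 1 \<le> B"
      unfolding eventually_sequentially by blast
    define B where "B = N"
    have B: "expectation (\<lambda>\<omega>. max 0 (V 0 \<omega> - real B)) < tgt" "1 \<le> B" using N by (auto simp: B_def)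
    define Bn where "Bn = real B"
    have Bn: "Bn > 0" using B(2) by (simp add: Bn_def)
    define eB where "eB = expectation (\<lambda>\<omega>. max 0 (V 0 \<omega> - Bn))"
    define \<mu>B where "\<mu>B = expectation (\<lambda>\<omega>. max 0 (min (V 0 \<omega>) Bn))"
    have eBt: "eB < tgt" using B(1) by (simp add: eB_def Bn_def)
    have sumeq: "\<mu>B + eB = \<mu>"
    proof -
      have i1: "integrable M (\<lambda>\<omega>. max 0 (min (V 0 \<omega>) Bn))"
        by (intro integrable_max integrable_min integrable_const Vint)
      have i2: "integrable M (\<lambda>\<omega>. max 0 (V 0 \<omega> - Bn))"
        by (intro integrable_max integrable_const Bochner_Integration.integrable_diff Vint)
      have "\<mu>B + eB = expectation (\<lambda>\<omega>. max 0 (min (V 0 \<omega>) Bn) + max 0 (V 0 \<omega> - Bn))"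
        unfolding \<mu>B_def eB_def
        by (rule Bochner_Integration.integral_add[symmetric, OF i1 i2])
      also have "\<dots> = expectation (V 0)"
      proof (rule Bochner_Integration.integral_cong[OF refl])
        fix \<omega> assume "\<omega> \<in> space M"
        hence "V 0 \<omega> > 0" using Vpos by blast
        thus "max 0 (min (V 0 \<omega>) Bn) + max 0 (V 0 \<omega> - Bn) = V 0 \<omega>" using Bn by auto
      qed
      finally show ?thesis by (simp add: \<mu>_def)
    qed
    have muB: "\<mu>B \<ge> \<mu> / 2" using sumeq eBt by (simp add: tgt_def)
    have muB0: "\<mu>B > 0" using muB mu' by simp
    define q where "q = nat \<lceil>4 * Bn / h\<rceil> + 1"
    have q1: "q \<ge> 1" by (simp add: q_def)
    have Bq: "4 * Bn \<le> h * real q"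
    proof -
      have "4 * Bn / h \<le> real q" unfolding q_def by linarith
      thus ?thesis using h by (simp add: divide_le_eq mult.commute)
    qed
    define L where "L = nat \<lceil>8 * real q * T / \<mu>\<rceil>"
    have Llo: "real L \<ge> 8 * real q * T / \<mu>" unfolding L_def by linarith
    have Lhi: "real L \<le> 8 * real q * T / \<mu> + 1"
    proof -
      have y0: "0 \<le> 8 * real q * T / \<mu>" using mu' T by simp
      hence "0 \<le> \<lceil>8 * real q * T / \<mu>\<rceil>" by simp
      hence "real L = real_of_int \<lceil>8 * real q * T / \<mu>\<rceil>" unfolding L_def by (rule of_nat_nat)
      also have "\<dots> \<le> 8 * real q * T / \<mu> + 1" by (rule of_int_ceiling_le_add_one)
      finally show ?thesis .
    qed
    have qpos: "real q \<ge> 1" using q1 by simp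
    have L1: "L \<ge> 1"
    proof -
      have "8 * real q * T / \<mu> > 0" using qpos T mu' by simp
      hence "real L > 0" using Llo by linarith
      thus ?thesis by simp
    qed
    have Lq: "real L \<le> C0 * real q"
    proof -
      have "8 * real q * T / \<mu> + 1 \<le> 8 * real q * T / \<mu> + real q" using qpos by simp
      also have "\<dots> = C0 * real q" by (simp add: C0_def algebra_simps)
      finally show ?thesis using Lhi by linarith
    qed
    have LB: "4 * real q * T \<le> real L * \<mu>B"
    proof -
      have "4 * real q * T = (8 * real q * T / \<mu>) * (\<mu> / 2)" using mu' by (simp add: field_simps)
      also have "\<dots> \<le> real L * \<mu>B"
        by (rule mult_mono[OF Llo muB]) (use mu' in auto)
      finally show ?thesis .
    qed
    have epsC: "2 * \<theta> * C0 \<le> \<epsilon>" using C0 by (simp add: \<theta>_def)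
    have mark: "4 * C0 * eB / h \<le> \<eta> / 2"
    proof -
      have "eB \<le> \<eta> * h / (8 * C0)" using eBt by (simp add: tgt_def)
      hence "4 * C0 * eB \<le> 4 * C0 * (\<eta> * h / (8 * C0))" using C0 by (intro mult_left_mono) auto
      also have "\<dots> = \<eta> / 2 * h" using C0 by (simp add: field_simps)
      finally show ?thesis using h by (simp add: divide_le_eq)
    qed
    define c1 where "c1 = 2 * (\<mu>B/2)\<^sup>2 / Bn\<^sup>2"
    have c1: "c1 > 0" using muB0 Bn by (simp add: c1_def)
    define c2 where "c2 = 2 * \<theta>\<^sup>2"
    have c2: "c2 > 0" using th by (simp add: c2_def)
    define LJ where "LJ = real (L*(J+1))"
    have "L*(J+1) > 0" using L1 by simp
    hence LJ: "LJ > 0" unfolding LJ_def by (simp only: of_nat_0_less_iff)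
    define X where "X = max (- ln (\<eta>/4) / c1) (- ln (\<eta> / (4 * LJ)) / c2)"
    have evb: "\<forall>\<^sub>F n in sequentially. real (n div q) \<ge> X" by (rule ev_div_ge[OF q1])
    have evn: "\<forall>\<^sub>F n in sequentially. n \<ge> max 1 q" by (rule eventually_ge_at_top)
    have "\<forall>\<^sub>F n in sequentially.
     prob {\<omega>\<in>space M. \<forall>t\<in>{0..T}. \<forall>x\<ge>0. Rbar n (\<lambda>i. V i \<omega>) (\<lambda>i. g n k i \<omega>) t (interval_I (h/4) x) \<le> \<epsilon>}
       \<ge> 1 - \<eta>"
      using evb evn evG
    proof eventually_elim
      case (elim n)
      define b where "b = n div q"
      have n1: "n \<ge> 1" and nq: "n \<ge> q" using elim(2) by auto
      have "0 < n div q" using nq q1 by (subst div_greater_zero_iff) auto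
      hence b1: "b \<ge> 1" by (simp add: b_def)
      have bX: "real b \<ge> X" using elim(1) by (simp add: b_def)
      have t1: "exp (-2 * real (L*b) * (\<mu>B/2)\<^sup>2 / Bn\<^sup>2) \<le> \<eta> / 4"
      proof -
        have "1 * real b \<le> real L * real b" using L1 by (intro mult_right_mono) auto
        hence "real b \<le> real (L*b)" by simp
        hence "c1 * real b \<le> c1 * real (L*b)" using c1 by (intro mult_left_mono) auto
        moreover have "-2 * real (L*b) * (\<mu>B/2)\<^sup>2 / Bn\<^sup>2 = - (c1 * real (L*b))"
          by (simp add: c1_def)
        ultimately have "-2 * real (L*b) * (\<mu>B/2)\<^sup>2 / Bn\<^sup>2 \<le> - c1 * real b" by simp
        hence "exp (-2 * real (L*b) * (\<mu>B/2)\<^sup>2 / Bn\<^sup>2) \<le> exp (- c1 * real b)" by simp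
        also have "\<dots> \<le> \<eta> / 4" by (rule exp_small[OF c1]) (use eta bX in \<open>auto simp: X_def\<close>)
        finally show ?thesis .
      qed
      have t2: "LJ * exp (-2 * real b * \<theta>\<^sup>2) \<le> \<eta> / 4"
      proof -
        have "exp (-2 * real b * \<theta>\<^sup>2) = exp (- c2 * real b)" by (simp add: c2_def)
        also have "\<dots> \<le> \<eta> / (4 * LJ)" by (rule exp_small[OF c2]) (use eta LJ bX in \<open>auto simp: X_def\<close>)
        finally have e2: "exp (-2 * real b * \<theta>\<^sup>2) \<le> \<eta> / (4 * LJ)" .
        have "LJ * exp (-2 * real b * \<theta>\<^sup>2) \<le> LJ * (\<eta> / (4 * LJ))"
          using e2 LJ by (intro mult_left_mono) auto
        also have "\<dots> = \<eta> / 4" using LJ by simp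
        finally show ?thesis .
      qed
      have tail: "exp (-2 * real (L*b) * (\<mu>B/2)\<^sup>2 / Bn\<^sup>2) + real (L*(J+1)) * exp (-2 * real b * \<theta>\<^sup>2) \<le> \<eta> / 2"
        using t1 t2 by (simp add: LJ_def)
      have Gdb: "\<And>j. j \<le> J \<Longrightarrow> measure (Gn n) (Ig h J j) < \<theta>" using elim(3) by simp
      have gd': "\<And>i. distr M borel ((\<lambda>(k', i). g n k' i) (k,i)) = Gn n" using gd[OF n1] by simp
      have gp': "\<And>i \<omega>. \<omega> \<in> space M \<Longrightarrow> (\<lambda>(k', i). g n k' i) (k,i) \<omega> > 0" using gpos[OF n1] by simp
      have "prob {\<omega>\<in>space M. \<forall>t\<in>{0..T}. \<forall>x\<ge>0.
          Rbar n (\<lambda>i. V i \<omega>) (\<lambda>i. (\<lambda>(k', i). g n k' i) (k,i) \<omega>) t (interval_I (h/4) x) \<le> \<epsilon>} \<ge> 1 - \<eta>"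
        using fixed_n[where V=V and gg="\<lambda>(k', i). g n k' i" and Gd="Gn n" and K=K and k=k,
              OF Vind Vid Vpos Vint gind[OF n1] k gd' gp' Gdb n1 b_def b1 q1 L1 J1 h Bn th T \<mu>B_def eB_def muB0 LB
                 Lq epsC Bq mark tail] .
      thus ?case by simp
    qed
    thus "\<forall>\<^sub>F n in sequentially.
     prob {\<omega>\<in>space M. \<forall>t\<in>{0..T}. \<forall>x\<ge>0. Rbar n (\<lambda>i. V i \<omega>) (\<lambda>i. g n k i \<omega>) t (interval_I (h/4) x) \<le> \<epsilon>}
       \<ge> 1 - \<eta>" .
  qed
qed

end

theorem lemma5p5:
  fixes M :: "'a measure"
    and K :: nat
    and lam :: "nat \<Rightarrow> real"
    and u :: "nat \<Rightarrow> nat \<Rightarrow> 'a \<Rightarrow> real"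
    and g :: "nat \<Rightarrow> nat \<Rightarrow> nat \<Rightarrow> 'a \<Rightarrow> real"
    and Gn :: "nat \<Rightarrow> nat \<Rightarrow> real measure"
    and G :: "nat \<Rightarrow> real measure"
    and T \<epsilon> \<eta> :: real
  assumes P: "prob_space M"
    \<comment> \<open>arrival processes: renewal processes with rate lam k and strictly positive interarrival times\<close>
    and lam_pos: "\<And>k. k < K \<Longrightarrow> lam k > 0"
    and u_indep: "\<And>k. k < K \<Longrightarrow> prob_space.indep_vars M (\<lambda>_. borel) (u k) UNIV"
    and u_ident: "\<And>k i. k < K \<Longrightarrow> distr M borel (u k i) = distr M borel (u k 0)"
    and u_pos: "\<And>k i \<omega>. k < K \<Longrightarrow> \<omega> \<in> space M \<Longrightarrow> u k i \<omega> > 0"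
    and u_int: "\<And>k. k < K \<Longrightarrow> integrable M (u k 0)"
    and u_mean: "\<And>k. k < K \<Longrightarrow> prob_space.expectation M (u k 0) = 1 / lam k"
    \<comment> \<open>limiting distributions Gamma_k: continuous on (0,oo) with finite mean\<close>
    and G_dist: "\<And>k. k < K \<Longrightarrow> real_distribution (G k)"
    and G_pos: "\<And>k. k < K \<Longrightarrow> emeasure (G k) {..0} = 0"
    and G_cont: "\<And>k x. k < K \<Longrightarrow> emeasure (G k) {x} = 0"
    and G_int: "\<And>k. k < K \<Longrightarrow> integrable (G k) (\<lambda>x. x)"
    \<comment> \<open>Assumption (AA)\<close>
    and Gn_dist: "\<And>n k. 1 \<le> n \<Longrightarrow> k < K \<Longrightarrow> real_distribution (Gn n k)"
    and Gn_int: "\<And>n k. 1 \<le> n \<Longrightarrow> k < K \<Longrightarrow> integrable (Gn n k) (\<lambda>x. x)"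
    and g_indep: "\<And>n. 1 \<le> n \<Longrightarrow>
        prob_space.indep_vars M (\<lambda>_. borel) (\<lambda>(k, i). g n k i) ({..<K} \<times> UNIV)"
    and g_distr: "\<And>n k i. 1 \<le> n \<Longrightarrow> k < K \<Longrightarrow> distr M borel (g n k i) = Gn n k"
    and g_pos: "\<And>n k i \<omega>. 1 \<le> n \<Longrightarrow> k < K \<Longrightarrow> \<omega> \<in> space M \<Longrightarrow> g n k i \<omega> > 0"
    and g_u_indep: "\<And>n. 1 \<le> n \<Longrightarrow>
        prob_space.indep_set M (gen_sigma M (\<lambda>(k, i). u k i) ({..<K} \<times> UNIV))
                               (gen_sigma M (\<lambda>(k, i). g n k i) ({..<K} \<times> UNIV))"
    and Gn_ui: "\<And>k. k < K \<Longrightarrow> ((\<lambda>m. SUP n\<in>{1..}. ennreal (\<integral>x. indicator {m<..} x * x \<partial>(Gn n k)))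
                                  \<longlongrightarrow> 0) at_top"
    and Gn_weak: "\<And>k. k < K \<Longrightarrow> weak_conv_m (\<lambda>n. Gn n k) (G k)"
    and T_pos: "T > 0" and eps_pos: "\<epsilon> > 0" and eta_pos: "\<eta> > 0"
  shows "\<exists>\<kappa>>0. liminf (\<lambda>n. ereal (prob_space.prob M
            {\<omega> \<in> space M. \<forall>k<K. \<forall>t\<in>{0..T}. \<forall>x\<ge>0.
               Rbar n (\<lambda>i. u k i \<omega>) (\<lambda>i. g n k i \<omega>) t (interval_I \<kappa> x) \<le> \<epsilon>}))
          \<ge> ereal (1 - \<eta>)"
proof -
  interpret P: prob_space M by (rule P)
  define Good where "Good \<kappa> n k = {\<omega> \<in> space M. \<forall>t\<in>{0..T}. \<forall>x\<ge>0.
               Rbar n (\<lambda>i. u k i \<omega>) (\<lambda>i. g n k i \<omega>) t (interval_I \<kappa> x) \<le> \<epsilon>}" for \<kappa> n k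
  show ?thesis
  proof (cases "K = 0")
    case True
    have "{\<omega> \<in> space M. \<forall>k<K. \<forall>t\<in>{0..T}. \<forall>x\<ge>0.
               Rbar n (\<lambda>i. u k i \<omega>) (\<lambda>i. g n k i \<omega>) t (interval_I 1 x) \<le> \<epsilon>} = space M" for n
      using True by auto
    hence "\<forall>\<^sub>F n in sequentially. ereal (1 - \<eta>) \<le> ereal (P.prob {\<omega> \<in> space M. \<forall>k<K. \<forall>t\<in>{0..T}. \<forall>x\<ge>0.
               Rbar n (\<lambda>i. u k i \<omega>) (\<lambda>i. g n k i \<omega>) t (interval_I 1 x) \<le> \<epsilon>})"
      using eta_pos by (simp add: P.prob_space)
    hence "ereal (1 - \<eta>) \<le> liminf (\<lambda>n. ereal (P.prob {\<omega> \<in> space M. \<forall>k<K. \<forall>t\<in>{0..T}. \<forall>x\<ge>0.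
               Rbar n (\<lambda>i. u k i \<omega>) (\<lambda>i. g n k i \<omega>) t (interval_I 1 x) \<le> \<epsilon>}))"
      by (rule Liminf_bounded)
    thus ?thesis by (intro exI[of _ 1]) auto
  next
    case False
    hence K1: "K \<ge> 1" by simp
    define \<eta>' where "\<eta>' = \<eta> / real K"
    have eta': "\<eta>' > 0" using eta_pos K1 by (simp add: \<eta>'_def)
    have hk: "\<exists>h0>0. \<forall>h. 0 < h \<longrightarrow> h \<le> h0 \<longrightarrow> (\<forall>\<^sub>F n in sequentially.
        P.prob (Good (h/4) n k) \<ge> 1 - \<eta>')" if k: "k < K" for k
    proof -
      have mu: "P.expectation (u k 0) > 0" using u_mean[OF k] lam_pos[OF k] by simp
      have Gc: "\<And>x. measure (G k) {x} = 0" using G_cont[OF k] by (simp add: measure_def)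
      show ?thesis unfolding Good_def
        by (rule P.per_k[where V="u k" and g=g and Gn="\<lambda>n. Gn n k" and G="G k" and K=K and k=k,
              OF u_indep[OF k] u_ident[OF k] u_pos[OF k] u_int[OF k] mu G_dist[OF k] Gc
                 Gn_dist[OF _ k] g_indep g_distr[OF _ k] g_pos[OF _ k] k Gn_weak[OF k] T_pos eps_pos eta'])
    qed
    then obtain h0 where h0: "\<And>k. k < K \<Longrightarrow> h0 k > 0"
      "\<And>k h. k < K \<Longrightarrow> 0 < h \<Longrightarrow> h \<le> h0 k \<Longrightarrow> (\<forall>\<^sub>F n in sequentially. P.prob (Good (h/4) n k) \<ge> 1 - \<eta>')"
      by metis
    define h where "h = Min (h0 ` {..<K})"
    have hne: "h0 ` {..<K} \<noteq> {}" using K1 by (simp add: lessThan_empty_iff)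
    have hpos: "h > 0" unfolding h_def using hne h0(1) by (subst Min_gr_iff) auto
    have hle: "h \<le> h0 k" if "k < K" for k unfolding h_def using that by (intro Min_le) auto
    have ev: "\<forall>\<^sub>F n in sequentially. \<forall>k\<in>{..<K}. P.prob (Good (h/4) n k) \<ge> 1 - \<eta>'"
      by (rule eventually_ball_finite) (use h0(2) hpos hle in auto)
    have kap: "h / 4 > 0" using hpos by simp
    have "\<forall>\<^sub>F n in sequentially. ereal (1 - \<eta>) \<le> ereal (P.prob {\<omega> \<in> space M. \<forall>k<K. \<forall>t\<in>{0..T}. \<forall>x\<ge>0.
               Rbar n (\<lambda>i. u k i \<omega>) (\<lambda>i. g n k i \<omega>) t (interval_I (h/4) x) \<le> \<epsilon>})"
      using ev eventually_ge_at_top[of 1]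
    proof eventually_elim
      case (elim n)
      have n1: "n \<ge> 1" using elim(2) .
      have Gs: "Good (h/4) n k \<in> sets M" if k: "k < K" for k
      proof -
        have um: "\<And>i. u k i \<in> borel_measurable M"
          using u_indep[OF k] by (auto simp: P.indep_vars_def)
        have gm: "\<And>i. g n k i \<in> borel_measurable M"
          using g_indep[OF n1] k by (auto simp: P.indep_vars_def)
        show ?thesis unfolding Good_def
          by (rule Good_meas[OF um gm _ n1 kap]) (use u_pos[OF k] less_imp_le T_pos in auto)
      qed
      have eq: "{\<omega> \<in> space M. \<forall>k<K. \<forall>t\<in>{0..T}. \<forall>x\<ge>0.
               Rbar n (\<lambda>i. u k i \<omega>) (\<lambda>i. g n k i \<omega>) t (interval_I (h/4) x) \<le> \<epsilon>}
          = space M - (\<Union>k\<in>{..<K}. space M - Good (h/4) n k)"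
        by (auto simp: Good_def)
      have "P.prob (\<Union>k\<in>{..<K}. space M - Good (h/4) n k) \<le> (\<Sum>k\<in>{..<K}. P.prob (space M - Good (h/4) n k))"
        by (rule P.finite_measure_subadditive_finite) (use Gs in auto)
      also have "\<dots> = (\<Sum>k\<in>{..<K}. 1 - P.prob (Good (h/4) n k))"
        by (intro sum.cong refl P.prob_compl) (use Gs in auto)
      also have "\<dots> \<le> (\<Sum>k\<in>{..<K}. \<eta>')"
      proof (intro sum_mono)
        fix k assume "k \<in> {..<K}"
        hence "1 - \<eta>' \<le> P.prob (Good (h/4) n k)" using elim(1) by blast
        thus "1 - P.prob (Good (h/4) n k) \<le> \<eta>'" by linarith
      qed
      also have "\<dots> = \<eta>" using K1 by (simp add: \<eta>'_def)
      finally have bad: "P.prob (\<Union>k\<in>{..<K}. space M - Good (h/4) n k) \<le> \<eta>" .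
      have Us: "(\<Union>k\<in>{..<K}. space M - Good (h/4) n k) \<in> sets M"
        by (rule sets.finite_UN) (use Gs in \<open>auto intro: sets.Diff\<close>)
      have "P.prob (space M - (\<Union>k\<in>{..<K}. space M - Good (h/4) n k)) \<ge> 1 - \<eta>"
        using P.prob_compl[OF Us] bad by simp
      thus ?case unfolding eq by simp
    qed
    hence "ereal (1 - \<eta>) \<le> liminf (\<lambda>n. ereal (P.prob {\<omega> \<in> space M. \<forall>k<K. \<forall>t\<in>{0..T}. \<forall>x\<ge>0.
               Rbar n (\<lambda>i. u k i \<omega>) (\<lambda>i. g n k i \<omega>) t (interval_I (h/4) x) \<le> \<epsilon>}))"
      by (rule Liminf_bounded)
    thus ?thesis using kap by blast
  qed
qed

end
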